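(* Let $\odot$ be a pseudo-multiplication on $[0,\infty]$ and $\mathcal{B}$ a $\sigma$-algebra on a nonempty set $E$. An optimal measure $\nu$ on $\mathcal{B}$ is semi-$\odot$-finite if and only if it is $\odot$-finite.
   Context: A pseudo-multiplication is a binary operation $\odot$ on $[0,\infty]$ which is associative, continuous on $(0,\infty)\times[0,\infty]$, with $s\mapsto s\odot t$ continuous on $(0,\infty]$ for each $t$, nondecreasing in both arguments, with a left identity $1_\odot$, without zero divisors ($s\odot t=0\Rightarrow0\in\{s,t\}$), and with $0\odot t=t\odot0=0$. An element $t\in[0,\infty]$ is $\odot$-finite if $\inf_{s>0}s\odot t=0$. An optimal measure is a map $\nu:\mathcal{B}\to[0,\infty]$ with $\nu(\emptyset)=0$, $\nu(B\cup B')=\max(\nu(B),\nu(B'))$, continuous from below ($\nu(\bigcup_nB_n)=\lim_n\nu(B_n)$ for nondecreasing sequences) and from above ($\nu(\bigcap_nB_n)=\lim_n\nu(B_n)$ for nonincreasing sequences). $\nu$ is $\odot$-finite if $\nu(E)$ is $\odot$-finite, and semi-$\odot$-finite if for every $B\in\mathcal{B}$, $\nu(B)=\sup\{\nu(A):A\in\mathcal{B},A\subset B,\nu(A)\text{ is }\odot\text{-finite}\}$. *)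

theory Defs
  imports "HOL-Analysis.Analysis"
begin

definition pseudo_mult :: "(ennreal \<Rightarrow> ennreal \<Rightarrow> ennreal) \<Rightarrow> bool" where
  "pseudo_mult f \<longleftrightarrow>
     (\<forall>a b c. f (f a b) c = f a (f b c)) \<and>
     continuous_on ({0<..<\<infinity>} \<times> UNIV) (\<lambda>(s, t). f s t) \<and>
     (\<forall>t. continuous_on {0<..} (\<lambda>s. f s t)) \<and>
     (\<forall>s s' t t'. s \<le> s' \<and> t \<le> t' \<longrightarrow> f s t \<le> f s' t') \<and>
     (\<exists>e. \<forall>t. f e t = t) \<and>
     (\<forall>s t. f s t = 0 \<longrightarrow> s = 0 \<or> t = 0) \<and>
     (\<forall>t. f 0 t = 0 \<and> f t 0 = 0)"

definition pm_finite :: "(ennreal \<Rightarrow> ennreal \<Rightarrow> ennreal) \<Rightarrow> ennreal \<Rightarrow> bool" where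
  "pm_finite f t \<longleftrightarrow> (INF s\<in>{0<..}. f s t) = 0"

definition optimal_measure :: "'a set set \<Rightarrow> ('a set \<Rightarrow> ennreal) \<Rightarrow> bool" where
  "optimal_measure \<B> \<nu> \<longleftrightarrow>
     \<nu> {} = 0 \<and>
     (\<forall>B\<in>\<B>. \<forall>B'\<in>\<B>. \<nu> (B \<union> B') = max (\<nu> B) (\<nu> B')) \<and>
     (\<forall>Bs. range Bs \<subseteq> \<B> \<and> incseq Bs \<longrightarrow> (\<lambda>n. \<nu> (Bs n)) \<longlonglongrightarrow> \<nu> (\<Union>n. Bs n)) \<and>
     (\<forall>Bs. range Bs \<subseteq> \<B> \<and> decseq Bs \<longrightarrow> (\<lambda>n. \<nu> (Bs n)) \<longlonglongrightarrow> \<nu> (\<Inter>n. Bs n))"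

definition pm_finite_measure ::
  "(ennreal \<Rightarrow> ennreal \<Rightarrow> ennreal) \<Rightarrow> 'a set \<Rightarrow> ('a set \<Rightarrow> ennreal) \<Rightarrow> bool" where
  "pm_finite_measure f E \<nu> \<longleftrightarrow> pm_finite f (\<nu> E)"

definition semi_pm_finite_measure ::
  "(ennreal \<Rightarrow> ennreal \<Rightarrow> ennreal) \<Rightarrow> 'a set set \<Rightarrow> ('a set \<Rightarrow> ennreal) \<Rightarrow> bool" where
  "semi_pm_finite_measure f \<B> \<nu> \<longleftrightarrow>
     (\<forall>B\<in>\<B>. \<nu> B = (SUP A\<in>{A\<in>\<B>. A \<subseteq> B \<and> pm_finite f (\<nu> A)}. \<nu> A))"

end

theory Submission
  imports Defs
begin

lemma pmf_mono:
  assumes pm: "pseudo_mult f" and fin: "pm_finite f t" and le: "t' \<le> t"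
  shows "pm_finite f t'"
proof -
  have mono: "\<And>s. f s t' \<le> f s t" using pm le unfolding pseudo_mult_def by auto
  have "(INF s\<in>{0<..}. f s t') \<le> (INF s\<in>{0<..}. f s t)"
    by (rule INF_mono) (use mono in blast)
  then show ?thesis using fin unfolding pm_finite_def by simp
qed

lemma pmf_zero:
  assumes pm: "pseudo_mult f"
  shows "pm_finite f 0"
proof -
  have "\<And>s. f s 0 = 0" using pm unfolding pseudo_mult_def by auto
  moreover have "{0::ennreal<..} \<noteq> {}" using zero_less_one greaterThan_iff by blast
  ultimately show ?thesis unfolding pm_finite_def by simp
qed

theorem proposition6p5:
  fixes f :: "ennreal \<Rightarrow> ennreal \<Rightarrow> ennreal"
    and E :: "'a set" and \<B> :: "'a set set" and \<nu> :: "'a set \<Rightarrow> ennreal"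
  assumes "pseudo_mult f"
    and "sigma_algebra E \<B>"
    and "E \<noteq> {}"
    and "optimal_measure \<B> \<nu>"
  shows "semi_pm_finite_measure f \<B> \<nu> \<longleftrightarrow> pm_finite_measure f E \<nu>"
proof -
  note pm = assms(1)
  interpret sa: sigma_algebra E \<B> by (rule assms(2))
  have max: "\<And>B B'. B \<in> \<B> \<Longrightarrow> B' \<in> \<B> \<Longrightarrow> \<nu> (B \<union> B') = max (\<nu> B) (\<nu> B')"
    and empty: "\<nu> {} = 0"
    and dec: "\<And>Bs. range Bs \<subseteq> \<B> \<Longrightarrow> decseq Bs \<Longrightarrow> (\<lambda>n. \<nu> (Bs n)) \<longlonglongrightarrow> \<nu> (\<Inter>n. Bs n)"
    using assms(4) unfolding optimal_measure_def by auto
  have mono: "\<nu> A \<le> \<nu> B" if "A \<in> \<B>" "B \<in> \<B>" "A \<subseteq> B" for A B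
  proof -
    have "\<nu> B = \<nu> (A \<union> B)" using that by (simp add: Un_absorb1)
    also have "\<dots> = max (\<nu> A) (\<nu> B)" using max that by blast
    finally show ?thesis by (metis max.cobounded1)
  qed
  show ?thesis
  proof
    assume semi: "semi_pm_finite_measure f \<B> \<nu>"
    show "pm_finite_measure f E \<nu>"
      unfolding pm_finite_measure_def
    proof (rule ccontr)
      assume nf: "\<not> pm_finite f (\<nu> E)"
      have "\<nu> E \<noteq> 0" using nf pmf_zero[OF pm] by auto
      then have "0 < \<nu> E" by (simp add: zero_less_iff_neq_zero)
      then obtain c where c0: "0 < c" and cE: "c < \<nu> E" using dense by blast
      let ?P = "\<lambda>D. D \<in> \<B> \<and> D \<subseteq> E \<and> pm_finite f (\<nu> D)"
      have step: "\<exists>A. A \<in> \<B> \<and> A \<subseteq> E - D \<and> pm_finite f (\<nu> A) \<and> c < \<nu> A" if PD: "?P D" for D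
      proof -
        have DE: "E - D \<in> \<B>" using PD by auto
        have "\<nu> E = \<nu> (D \<union> (E - D))" using PD by (simp add: Un_absorb1)
        also have "\<dots> = max (\<nu> D) (\<nu> (E - D))" using max PD DE by blast
        finally have eq: "\<nu> E = max (\<nu> D) (\<nu> (E - D))" .
        have "\<nu> D \<noteq> \<nu> E" using PD nf by auto
        then have "\<nu> E = \<nu> (E - D)" using eq by (metis max_def)
        also have "\<dots> = (SUP A\<in>{A\<in>\<B>. A \<subseteq> E - D \<and> pm_finite f (\<nu> A)}. \<nu> A)"
          using semi DE unfolding semi_pm_finite_measure_def by blast
        finally have "c < (SUP A\<in>{A\<in>\<B>. A \<subseteq> E - D \<and> pm_finite f (\<nu> A)}. \<nu> A)" using cE by simp
        then show ?thesis by (auto simp: less_SUP_iff)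
      qed
      define g where "g D = (SOME A. A \<in> \<B> \<and> A \<subseteq> E - D \<and> pm_finite f (\<nu> A) \<and> c < \<nu> A)" for D
      have g: "g D \<in> \<B> \<and> g D \<subseteq> E - D \<and> pm_finite f (\<nu> (g D)) \<and> c < \<nu> (g D)" if "?P D" for D
        unfolding g_def using someI_ex[OF step[OF that]] .
      define U where "U = rec_nat {} (\<lambda>n D. D \<union> g D)"
      have U0: "U 0 = {}" and US: "\<And>n. U (Suc n) = U n \<union> g (U n)" by (simp_all add: U_def)
      have PU: "?P (U n)" for n
      proof (induction n)
        case 0 then show ?case using U0 pmf_zero[OF pm] empty by simp
      next
        case (Suc n)
        have gn: "g (U n) \<in> \<B> \<and> g (U n) \<subseteq> E - U n \<and> pm_finite f (\<nu> (g (U n)))"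
          using g[OF Suc] by blast
        have "\<nu> (U (Suc n)) = max (\<nu> (U n)) (\<nu> (g (U n)))" using US max Suc gn by simp
        then have "pm_finite f (\<nu> (U (Suc n)))" using Suc gn by (simp add: max_def)
        then show ?case using US Suc gn by auto
      qed
      have incU: "incseq U" by (rule incseq_SucI) (simp add: US)
      define T where "T n = (\<Union>m. U m) - U n" for n
      have Tin: "range T \<subseteq> \<B>" using PU unfolding T_def by auto
      have decT: "decseq T" using incU unfolding T_def decseq_def incseq_def by blast
      have Tempty: "(\<Inter>n. T n) = {}" unfolding T_def by auto
      have Tbig: "c < \<nu> (T n)" for n
      proof -
        have gs: "g (U n) \<subseteq> T n" using g[OF PU[of n]] US unfolding T_def by blast
        have "c < \<nu> (g (U n))" using g[OF PU[of n]] by blast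
        also have "\<dots> \<le> \<nu> (T n)" using mono gs g[OF PU[of n]] Tin by blast
        finally show ?thesis .
      qed
      have "(\<lambda>n. \<nu> (T n)) \<longlonglongrightarrow> 0" using dec[OF Tin decT] Tempty empty by simp
      then have "eventually (\<lambda>n. \<nu> (T n) < c) sequentially"
        using c0 by (simp add: order_tendsto_iff)
      then obtain n where "\<nu> (T n) < c" by (meson eventually_sequentially order_refl)
      then show False using Tbig[of n] by simp
    qed
  next
    assume fin: "pm_finite_measure f E \<nu>"
    show "semi_pm_finite_measure f \<B> \<nu>"
      unfolding semi_pm_finite_measure_def
    proof
      fix B assume B: "B \<in> \<B>"
      have BE: "B \<subseteq> E" using B sa.sets_into_space by auto
      have "pm_finite f (\<nu> B)"
        using pmf_mono[OF pm fin[unfolded pm_finite_measure_def]] mono[OF B sa.top BE] by blast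
      then have inS: "B \<in> {A\<in>\<B>. A \<subseteq> B \<and> pm_finite f (\<nu> A)}" using B by simp
      show "\<nu> B = (SUP A\<in>{A\<in>\<B>. A \<subseteq> B \<and> pm_finite f (\<nu> A)}. \<nu> A)"
      proof (rule antisym)
        show "\<nu> B \<le> (SUP A\<in>{A\<in>\<B>. A \<subseteq> B \<and> pm_finite f (\<nu> A)}. \<nu> A)"
          using inS by (rule SUP_upper)
        show "(SUP A\<in>{A\<in>\<B>. A \<subseteq> B \<and> pm_finite f (\<nu> A)}. \<nu> A) \<le> \<nu> B"
          by (rule SUP_least) (use mono B in auto)
      qed
    qed
  qed
qed

end
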